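(* Let $k\ge 1$ be even. Then for every compact domain $\Omega\subset\mathbb{R}^{2k+1}$ with smooth boundary and every closed Dirichlet $(k+1)$-form $\alpha$ on $\Omega$, the helicity $H(\alpha)=0$.
   Context: A differential $p$-form on $\Omega$ is Dirichlet if its pullback to $\partial\Omega$ vanishes. $C_2[\Omega]$ denotes the Fulton–MacPherson compactification of $C_2(\Omega)=\{(x,y)\in\Omega^2:x\ne y\}$ (the closure of the image of $C_2(\Omega)$ under $(x,y)\mapsto(x,y,\frac{x-y}{|x-y|},\frac{y-x}{|y-x|})\in\Omega^2\times(S^{2k})^2$), a compact manifold with corners oriented as $\Omega\times\Omega$, with surjection $p:C_2[\Omega]\to\Omega\times\Omega$. For a form $\alpha$ on $\Omega$, $\alpha_x,\alpha_y$ are the pullbacks of $\alpha$ under $\mathrm{pr}_1\circ p$ and $\mathrm{pr}_2\circ p$. The Gauss map $g:C_2[\Omega]\to S^{2k}$ is the smooth extension of $(x,y)\mapsto (y-x)/|y-x|$. Let $\omega$ be the rotation-invariant volume form on $S^{2k}$ with total integral $1$. The helicity of a closed Dirichlet $(k+1)$-form $\alpha$ is $H(\alpha)=\int_{C_2[\Omega]}\alpha_x\wedge\alpha_y\wedge g^*\omega$. *)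

theory Defs
  imports "HOL-Analysis.Analysis"
begin

fun Ck_on :: "nat \<Rightarrow> 'a::real_normed_vector set \<Rightarrow> ('a \<Rightarrow> real) \<Rightarrow> bool" where
  "Ck_on 0 U f = continuous_on U f"
| "Ck_on (Suc m) U f =
     (f differentiable_on U \<and> (\<forall>v. Ck_on m U (\<lambda>x. frechet_derivative f (at x) v)))"

definition smooth_on :: "'a::real_normed_vector set \<Rightarrow> ('a \<Rightarrow> real) \<Rightarrow> bool" where
  "smooth_on U f \<longleftrightarrow> (\<forall>m. Ck_on m U f)"

definition local_defining_function ::
  "'a::euclidean_space set \<Rightarrow> 'a \<Rightarrow> 'a set \<Rightarrow> ('a \<Rightarrow> real) \<Rightarrow> bool" where
  "local_defining_function \<Omega> p V \<rho> \<longleftrightarrow>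
     open V \<and> p \<in> V \<and> smooth_on V \<rho> \<and>
     (\<forall>x\<in>V. frechet_derivative \<rho> (at x) \<noteq> (\<lambda>v. 0)) \<and>
     \<Omega> \<inter> V = {x\<in>V. \<rho> x \<le> 0}"

definition smooth_boundary :: "'a::euclidean_space set \<Rightarrow> bool" where
  "smooth_boundary \<Omega> \<longleftrightarrow> (\<forall>p\<in>frontier \<Omega>. \<exists>V \<rho>. local_defining_function \<Omega> p V \<rho>)"

section \<open>Differential forms, represented pointwise as alternating multilinear maps\<close>

definition alt_form :: "nat \<Rightarrow> ('v::real_vector list \<Rightarrow> real) \<Rightarrow> bool" where
  "alt_form p A \<longleftrightarrow>
     (\<forall>vs i. length vs = p \<longrightarrow> i < p \<longrightarrow> linear (\<lambda>v. A (vs[i := v]))) \<and>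
     (\<forall>vs i j. length vs = p \<longrightarrow> i < j \<longrightarrow> j < p \<longrightarrow> vs ! i = vs ! j \<longrightarrow> A vs = 0)"

definition diff_form :: "nat \<Rightarrow> 'a::euclidean_space set \<Rightarrow> ('a \<Rightarrow> 'a list \<Rightarrow> real) \<Rightarrow> bool" where
  "diff_form p U \<alpha> \<longleftrightarrow> (\<forall>x\<in>U. alt_form p (\<alpha> x)) \<and> (\<forall>vs. smooth_on U (\<lambda>x. \<alpha> x vs))"

definition del_nth :: "nat \<Rightarrow> 'b list \<Rightarrow> 'b list" where
  "del_nth i vs = take i vs @ drop (Suc i) vs"

text \<open>Exterior derivative (coordinate-free formula with constant vector fields).\<close>
definition ext_d :: "('a::real_normed_vector \<Rightarrow> 'a list \<Rightarrow> real) \<Rightarrow> 'a \<Rightarrow> 'a list \<Rightarrow> real" where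
  "ext_d \<alpha> x vs =
     (\<Sum>i<length vs. (-1) ^ i * frechet_derivative (\<lambda>y. \<alpha> y (del_nth i vs)) (at x) (vs ! i))"

text \<open>Wedge product of a p-covector and a q-covector (shuffle formula).\<close>
definition wedge :: "nat \<Rightarrow> nat \<Rightarrow> ('v list \<Rightarrow> real) \<Rightarrow> ('v list \<Rightarrow> real) \<Rightarrow> 'v list \<Rightarrow> real" where
  "wedge p q a b vs =
     (\<Sum>S\<in>{S. S \<subseteq> {..<p+q} \<and> card S = p}.
        (-1) ^ (\<Sum>S - p * (p - 1) div 2) * a (nths vs S) * b (nths vs ({..<p+q} - S)))"

text \<open>Dirichlet condition: the pullback to the boundary vanishes, i.e. the form vanishes
  on tuples of vectors tangent to the boundary (tangent space = kernel of d rho).\<close>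
definition dirichlet :: "nat \<Rightarrow> 'a::euclidean_space set \<Rightarrow> ('a \<Rightarrow> 'a list \<Rightarrow> real) \<Rightarrow> bool" where
  "dirichlet p \<Omega> \<alpha> \<longleftrightarrow>
     (\<forall>x\<in>frontier \<Omega>. \<forall>V \<rho>. local_defining_function \<Omega> x V \<rho> \<longrightarrow>
        (\<forall>vs. length vs = p \<longrightarrow> (\<forall>v\<in>set vs. frechet_derivative \<rho> (at x) v = 0) \<longrightarrow> \<alpha> x vs = 0))"

text \<open>A fixed enumeration of the coordinate index type (fixes an orientation convention).\<close>
definition enum_idx :: "'n::finite list" where
  "enum_idx = (SOME xs. distinct xs \<and> set xs = UNIV)"

definition idx_pos :: "'n::finite \<Rightarrow> nat" where
  "idx_pos i = (SOME m. m < length (enum_idx :: 'n list) \<and> enum_idx ! m = i)"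

definition list_det :: "(real^'n::finite) list \<Rightarrow> real" where
  "list_det vs = det (\<chi> i j. (vs ! idx_pos i) $ j)"

definition sphere_area :: "'n::finite itself \<Rightarrow> real" where
  "sphere_area _ = real CARD('n) * measure lborel (ball (0::real^'n) 1)"

text \<open>Rotation-invariant volume form of the unit sphere, normalised to total integral 1.\<close>
definition sphere_vol :: "real^'n::finite \<Rightarrow> (real^'n) list \<Rightarrow> real" where
  "sphere_vol u vs = list_det (u # vs) / sphere_area TYPE('n)"

definition gauss :: "(real^'n::finite) \<times> (real^'n) \<Rightarrow> real^'n" where
  "gauss z = (snd z - fst z) /\<^sub>R norm (snd z - fst z)"

definition gauss_pullback :: "(real^'n::finite) \<times> (real^'n) \<Rightarrow> ((real^'n) \<times> (real^'n)) list \<Rightarrow> real" where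
  "gauss_pullback z ws = sphere_vol (gauss z) (map (frechet_derivative gauss (at z)) ws)"

definition prod_basis :: "((real^'n::finite) \<times> (real^'n)) list" where
  "prod_basis = map (\<lambda>i. (axis i 1, 0)) enum_idx @ map (\<lambda>i. (0, axis i 1)) enum_idx"

definition config2 :: "(real^'n::finite) set \<Rightarrow> ((real^'n) \<times> (real^'n)) set" where
  "config2 \<Omega> = {(x, y). x \<in> \<Omega> \<and> y \<in> \<Omega> \<and> x \<noteq> y}"

text \<open>Density of the top form alpha_x ^ alpha_y ^ g^*omega w.r.t. the oriented frame of R^n x R^n.\<close>
definition helicity_density ::
  "nat \<Rightarrow> (real^'n::finite \<Rightarrow> (real^'n) list \<Rightarrow> real) \<Rightarrow> (real^'n) \<times> (real^'n) \<Rightarrow> real" where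
  "helicity_density p \<alpha> z =
     wedge (2 * p) (CARD('n) - 1)
       (wedge p p (\<lambda>ws. \<alpha> (fst z) (map fst ws)) (\<lambda>ws. \<alpha> (snd z) (map snd ws)))
       (gauss_pullback z) prod_basis"

text \<open>Integral over C_2[Omega]: the boundary strata have measure zero, so it is the
  Lebesgue integral over the open configuration space C_2(Omega).\<close>
definition helicity :: "nat \<Rightarrow> (real^'n::finite) set \<Rightarrow> (real^'n \<Rightarrow> (real^'n) list \<Rightarrow> real) \<Rightarrow> real" where
  "helicity p \<Omega> \<alpha> = set_lebesgue_integral lborel (config2 \<Omega>) (helicity_density p \<alpha>)"

end

theory Submission
  imports Defs
begin


lemma integral_swap_anti:
  fixes h :: "('a::euclidean_space \<times> 'a) \<Rightarrow> real"
  assumes "\<And>z. h (prod.swap z) = - h z"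
  shows "integral\<^sup>L lborel h = 0"
proof (cases "integrable lborel h")
  case True
  then have "h \<in> borel_measurable lborel" by (rule borel_measurable_integrable)
  then have m: "h \<in> borel_measurable (lborel \<Otimes>\<^sub>M lborel)" unfolding lborel_prod .
  have eq: "(\<lambda>(x,y). h (y,x)) = (\<lambda>z. - h z)"
  proof (rule ext)
    fix z :: "'a \<times> 'a"
    show "(\<lambda>(x,y). h (y,x)) z = - h z"
      using assms[of z] by (cases z) (simp only: prod.swap_def split fst_conv snd_conv)
  qed
  have "(\<integral>(x,y). h (y,x) \<partial>(lborel \<Otimes>\<^sub>M lborel)) = integral\<^sup>L (lborel \<Otimes>\<^sub>M lborel) h"
    using lborel_pair.integral_product_swap[OF m] .
  then have "integral\<^sup>L lborel (\<lambda>z. - h z) = integral\<^sup>L lborel h"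
    unfolding eq lborel_prod .
  then show ?thesis unfolding integral_minus by linarith
next
  case False
  then show ?thesis by (rule not_integrable_integral_eq)
qed

lemma enum_idx_props: "distinct (enum_idx :: 'n::finite list) \<and> set (enum_idx :: 'n list) = UNIV"
  unfolding enum_idx_def by (rule someI_ex) (use finite_distinct_list[OF finite_class.finite_UNIV] in auto)

lemma length_enum_idx: "length (enum_idx :: 'n::finite list) = CARD('n)"
  using enum_idx_props distinct_card by (metis)

lemma idx_pos: "idx_pos (i::'n::finite) < CARD('n) \<and> enum_idx ! idx_pos i = i"
proof -
  have "\<exists>m. m < length (enum_idx :: 'n list) \<and> enum_idx ! m = i"
    using enum_idx_props by (metis in_set_conv_nth UNIV_I)
  then show ?thesis unfolding idx_pos_def length_enum_idx[symmetric] by (rule someI_ex)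
qed

lemma idx_pos_enum: "m < CARD('n::finite) \<Longrightarrow> idx_pos (enum_idx ! m :: 'n) = m"
  using idx_pos[of "enum_idx ! m :: 'n"] enum_idx_props length_enum_idx
  by (metis nth_eq_iff_index_eq)

lemma det_uminus: "det (\<chi> i j. - (A $ i $ j)) = (-1) ^ CARD('n) * det (A :: real^'n::finite^'n)"
proof -
  have "\<And>p. (\<Prod>i\<in>UNIV. - A$i$p i) = (-1) ^ CARD('n) * (\<Prod>i\<in>UNIV. A$i$p i)"
  proof -
    fix p :: "'n \<Rightarrow> 'n"
    have "(\<Prod>i\<in>UNIV. - A$i$p i) = (\<Prod>i\<in>UNIV. (-1) * A$i$p i)" by simp
    also have "\<dots> = (-1) ^ CARD('n) * (\<Prod>i\<in>UNIV. A$i$p i)"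
      by (subst prod.distrib) (simp only: prod_constant)
    finally show "?thesis p" .
  qed
  then show ?thesis unfolding det_def by (simp add: sum_distrib_left mult_ac)
qed

lemma list_det_uminus:
  assumes "length vs = CARD('n::finite)"
  shows "list_det (map uminus vs :: (real^'n) list) = (-1) ^ CARD('n) * list_det vs"
proof -
  have "list_det (map uminus vs) = det (\<chi> i j. - ((\<chi> i j. (vs ! idx_pos i) $ j) $ i $ j))"
    unfolding list_det_def using idx_pos[where 'n='n] assms
    by (intro arg_cong[of _ _ det]) (simp add: vec_eq_iff)
  then show ?thesis using det_uminus[of "(\<chi> i j. (vs ! idx_pos i) $ j) :: real^'n^'n"] unfolding list_det_def by simp
qed



lemma swap_nth:
  assumes "m < length (P @ x # M @ y # R)"
  shows "(P @ y # M @ x # R) ! m = (P @ x # M @ y # R) ! (Transposition.transpose (length P) (length P + 1 + length M) m)"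
proof -
  consider "m < length P" | "m = length P" | "length P < m \<and> m < length P + 1 + length M"
    | "m = length P + 1 + length M" | "m > length P + 1 + length M" by linarith
  then show ?thesis
  proof cases
    case 1 then show ?thesis by (simp add: nth_append Transposition.transpose_def)
  next
    case 2 then show ?thesis by (simp add: nth_append Transposition.transpose_def)
  next
    case 3 then show ?thesis by (auto simp add: nth_append Transposition.transpose_def nth_Cons' )
  next
    case 4 then show ?thesis by (simp add: nth_append Transposition.transpose_def nth_Cons')
  next
    case 5 then show ?thesis by (auto simp add: nth_append Transposition.transpose_def nth_Cons')
  qed
qed

lemma list_det_swap:
  fixes P M R :: "(real^'n::finite) list"
  assumes len: "length (P @ x # M @ y # R) = CARD('n)"
  shows "list_det (P @ y # M @ x # R) = - list_det (P @ x # M @ y # R)"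
proof -
  define vs where "vs = P @ x # M @ y # R"
  define ws where "ws = P @ y # M @ x # R"
  define i where "i = length P"
  define j where "j = length P + 1 + length M"
  have ij: "i < CARD('n)" "j < CARD('n)" "i \<noteq> j" using len unfolding i_def j_def by auto
  define a :: 'n where "a = enum_idx ! i"
  define b :: 'n where "b = enum_idx ! j"
  have pa: "idx_pos a = i" "idx_pos b = j" using idx_pos_enum ij unfolding a_def b_def by auto
  have ab: "a \<noteq> b" using pa ij by auto
  have inj: "idx_pos r = idx_pos r' \<Longrightarrow> r = r'" for r r' :: 'n by (metis idx_pos)
  have tp: "idx_pos (Transposition.transpose a b r) = Transposition.transpose i j (idx_pos r)" for r
    using pa inj by (auto simp: Transposition.transpose_def dest: inj)
  have row: "ws ! idx_pos r = vs ! idx_pos (Transposition.transpose a b r)" for r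
    unfolding tp ws_def vs_def i_def j_def
    by (rule swap_nth) (use len idx_pos[of r] in simp)
  have "list_det ws = det (\<chi> r. (\<chi> r c. (vs ! idx_pos r) $ c) $ Transposition.transpose a b r)"
    unfolding list_det_def row by simp
  also have "\<dots> = of_int (sign (Transposition.transpose a b)) * list_det vs"
    unfolding list_det_def by (rule det_permute_rows) (simp add: permutes_swap_id)
  also have "\<dots> = - list_det vs" using ab by (simp add: sign_swap_id)
  finally show ?thesis unfolding vs_def ws_def .
qed

lemma list_det_blockswap:
  fixes P Q R X Y :: "(real^'n::finite) list"
  assumes "length (P @ X @ Q @ Y @ R) = CARD('n)" "length X = length Y"
  shows "list_det (P @ X @ Q @ Y @ R) = (-1) ^ length X * list_det (P @ Y @ Q @ X @ R)"
  using assms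
proof (induction X arbitrary: P Q Y)
  case Nil then show ?case by simp
next
  case (Cons x X)
  obtain y Y' where Y: "Y = y # Y'" using Cons.prems by (cases Y) auto
  have "list_det (P @ (x # X) @ Q @ Y @ R) = - list_det (P @ y # (X @ Q) @ x # (Y' @ R))"
    using list_det_swap[of P y "X @ Q" x "Y' @ R"] Cons.prems Y by simp
  also have "list_det (P @ y # (X @ Q) @ x # (Y' @ R)) = list_det ((P @ [y]) @ X @ (Q @ [x]) @ Y' @ R)"
    by simp
  also have "\<dots> = (-1) ^ length X * list_det ((P @ [y]) @ Y' @ (Q @ [x]) @ X @ R)"
    by (rule Cons.IH) (use Cons.prems Y in auto)
  finally show ?case using Y by simp
qed



lemma alt_zero:
  assumes "alt_form p A" "length vs = p" "0 \<in> set vs"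
  shows "A vs = 0"
proof -
  obtain i where i: "i < p" "vs ! i = 0" using assms(2,3) by (metis in_set_conv_nth)
  have "linear (\<lambda>v. A (vs[i := v]))" using assms(1,2) i unfolding alt_form_def by blast
  then have "A (vs[i := 0]) = 0" using linear_0 by fastforce
  then show ?thesis using i by (metis list_update_id)
qed

lemma sum_lessThan_twice: "2 * \<Sum>{..<p::nat} = p * (p - 1)"
proof (induction p)
  case (Suc p) then show ?case by (cases p) (auto simp: algebra_simps)
qed simp

lemma nths_none: "\<forall>i<length xs. i \<notin> A \<Longrightarrow> nths xs A = []"
proof -
  assume "\<forall>i<length xs. i \<notin> A"
  then have "{i. i < length xs \<and> i \<in> A} = {}" by auto
  then show ?thesis by (metis length_0_conv length_nths card.empty)
qed

lemma length_nths_sub: "A \<subseteq> {..<length xs} \<Longrightarrow> length (nths xs A) = card A"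
  by (simp add: length_nths) (metis (no_types, lifting) Collect_cong Collect_mem_eq lessThan_iff subsetD)

lemma wedge_inner:
  fixes xs ys :: "'v::real_vector list"
  assumes a: "alt_form p a" and c: "alt_form p c" and len: "length xs + length ys = 2*p"
  shows "wedge p p (\<lambda>ws. a (map fst ws)) (\<lambda>ws. c (map snd ws))
           (map (\<lambda>v. (v, 0::'v)) xs @ map (\<lambda>v. (0::'v, v)) ys)
         = (if length xs = p then a xs * c ys else 0)"
proof -
  define l where "l = map (\<lambda>v. (v, 0::'v)) xs @ map (\<lambda>v. (0::'v, v)) ys"
  define L where "L = length xs"
  have ll: "length l = 2 * p" using len unfolding l_def by simp
  let ?C = "{S. S \<subseteq> {..<p+p} \<and> card S = p}"
  have trm: "(-1) ^ (\<Sum>T - p * (p - 1) div 2) * a (map fst (nths l T)) * c (map snd (nths l ({..<p+p} - T)))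
      = (if T = {..<p} then (if L = p then a xs * c ys else 0) else 0)" if T: "T \<in> ?C" for T
  proof -
    have Tsub: "T \<subseteq> {..<length l}" "card T = p" using T ll by auto
    have lenT: "length (map fst (nths l T)) = p" using length_nths_sub[OF Tsub(1)] Tsub(2) by simp
    have Tc: "{..<p+p} - T \<subseteq> {..<length l}" using ll by auto
    have "card ({..<p+p} - T) = p" using T by (simp add: card_Diff_subset finite_subset[of T "{..<p+p}"])
    then have lenTc: "length (map snd (nths l ({..<p+p} - T))) = p" using length_nths_sub[OF Tc] by simp
    show ?thesis
    proof (cases "\<exists>t\<in>T. t \<ge> L")
      case True
      then obtain t where t: "t \<in> T" "t \<ge> L" by auto
      have "t < length l" using t Tsub by auto
      then have "fst (l ! t) = 0" using t unfolding l_def L_def by (simp add: nth_append)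
      then have "0 \<in> set (map fst (nths l T))" using t \<open>t < length l\<close>
        by (force simp: set_nths)
      then have "a (map fst (nths l T)) = 0" by (rule alt_zero[OF a lenT])
      moreover have "\<not> (T = {..<p} \<and> L = p)" using t by auto
      ultimately show ?thesis by auto
    next
      case F1: False
      show ?thesis
      proof (cases "\<exists>t\<in>{..<p+p} - T. t < L")
        case True
        then obtain t where t: "t \<in> {..<p+p} - T" "t < L" by auto
        have "t < length l" using t ll by auto
        then have "snd (l ! t) = 0" using t unfolding l_def L_def by (simp add: nth_append)
        then have "0 \<in> set (map snd (nths l ({..<p+p} - T)))" using t \<open>t < length l\<close>
          by (force simp: set_nths)
        then have "c (map snd (nths l ({..<p+p} - T))) = 0" by (rule alt_zero[OF c lenTc])
        moreover have "\<not> (T = {..<p} \<and> L = p)" using t by auto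
        ultimately show ?thesis by auto
      next
        case False
        have Lle: "L \<le> 2 * p" using len unfolding L_def by simp
        have TL: "T = {..<L}" using F1 False Lle by (force)
        have Lp: "L = p" using TL Tsub by simp
        have s0: "\<Sum>T - p * (p - 1) div 2 = 0" using TL Lp sum_lessThan_twice[of p] by simp
        have fx: "map fst (nths l T) = xs" using TL Lp unfolding l_def L_def
          by (simp add: comp_def)
        have "nths l ({..<p+p} - T) = map (\<lambda>v. (0::'v, v)) ys"
        proof -
          have "nths (map (\<lambda>v. (v, 0::'v)) xs) ({..<p+p} - T) = []"
            by (rule nths_none) (use TL Lp L_def in auto)
          moreover have "{j. j + length xs \<in> {..<p+p} - T} = {..<p}" using TL Lp L_def by auto
          moreover have "length ys = p" using len Lp L_def by simp
          ultimately show ?thesis unfolding l_def nths_append by simp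
        qed
        then have fy: "map snd (nths l ({..<p+p} - T)) = ys" by (simp add: comp_def)
        show ?thesis using s0 fx fy TL Lp by simp
      qed
    qed
  qed
  have "wedge p p (\<lambda>ws. a (map fst ws)) (\<lambda>ws. c (map snd ws)) l
      = (\<Sum>T\<in>?C. (if T = {..<p} then (if L = p then a xs * c ys else 0) else 0))"
    unfolding wedge_def by (rule sum.cong) (use trm in auto)
  also have "\<dots> = (if L = p then a xs * c ys else 0)"
    by (subst sum.delta) auto
  finally show ?thesis unfolding l_def L_def .
qed



lemma gauss_swap: "gauss (prod.swap z) = - (gauss z :: real^'n::finite)"
  unfolding gauss_def by (cases z) (auto simp: norm_minus_commute scaleR_diff_right)

lemma gauss_differentiable:
  assumes "fst z \<noteq> snd (z :: (real^'n::finite) \<times> (real^'n))"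
  shows "gauss differentiable (at z)"
proof -
  have ne: "norm (snd z - fst z) \<noteq> 0" using assms by simp
  have "(\<lambda>w::(real^'n) \<times> (real^'n). snd w - fst w) differentiable (at z)"
    by (intro differentiable_diff bounded_linear_imp_differentiable bounded_linear_fst bounded_linear_snd)
  moreover have "(\<lambda>w::(real^'n) \<times> (real^'n). inverse (norm (snd w - fst w))) differentiable (at z)"
  proof -
    have "(\<lambda>w::(real^'n) \<times> (real^'n). norm (snd w - fst w)) differentiable (at z)"
      by (rule differentiable_compose[of norm]) (use ne calculation in auto)
    then show ?thesis by (rule differentiable_inverse) (use ne in simp)
  qed
  ultimately show ?thesis unfolding gauss_def
    by (intro differentiable_scaleR)
qed

lemma gauss_deriv_swap:
  assumes "fst z \<noteq> snd (z :: (real^'n::finite) \<times> (real^'n))"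
  shows "frechet_derivative gauss (at (prod.swap z)) = (\<lambda>v. - frechet_derivative gauss (at z) (prod.swap v))"
proof -
  define g' where "g' = frechet_derivative gauss (at z)"
  have d: "(gauss has_derivative g') (at z)"
    unfolding g'_def using gauss_differentiable[OF assms] frechet_derivative_works by blast
  have s: "((\<lambda>w::(real^'n) \<times> (real^'n). prod.swap w) has_derivative (\<lambda>v. prod.swap v)) (at (prod.swap z))"
  proof -
    have "((\<lambda>w::(real^'n) \<times> (real^'n). (snd w, fst w)) has_derivative (\<lambda>v. (snd v, fst v))) (at (prod.swap z))"
      by (intro derivative_intros)
    then show ?thesis by (simp add: prod.swap_def)
  qed
  have "((\<lambda>w. gauss (prod.swap w)) has_derivative (\<lambda>v. g' (prod.swap v))) (at (prod.swap z))"
    using diff_chain_at[OF s, of gauss g'] d by (simp add: comp_def)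
  then have "((\<lambda>w. - gauss (prod.swap w)) has_derivative (\<lambda>v. - g' (prod.swap v))) (at (prod.swap z))"
    by (rule has_derivative_minus)
  moreover have "(\<lambda>w. - gauss (prod.swap w)) = gauss" by (simp add: gauss_swap fun_eq_iff)
  ultimately show ?thesis unfolding g'_def[symmetric] using frechet_derivative_at by metis
qed



lemma nths_cong_lt: "(\<And>i. i < length xs \<Longrightarrow> i \<in> A \<longleftrightarrow> i \<in> B) \<Longrightarrow> nths xs A = nths xs B"
  unfolding nths_def by (rule arg_cong[where f="map fst"], rule filter_cong) (auto simp: in_set_zip)

definition rot :: "nat \<Rightarrow> nat \<Rightarrow> nat" where "rot n i = (if i < n then i + n else i - n)"

lemma rot_rot: "i < 2*n \<Longrightarrow> rot n (rot n i) = i" unfolding rot_def by auto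
lemma rot_lt: "i < 2*n \<Longrightarrow> rot n i < 2*n" unfolding rot_def by auto

lemma rot_img_sub: "S \<subseteq> {..<2*n} \<Longrightarrow> rot n ` S \<subseteq> {..<2*n}"
  by (rule image_subsetI) (meson lessThan_iff rot_lt subsetD)
lemma rot_img_img: "S \<subseteq> {..<2*n} \<Longrightarrow> rot n ` rot n ` S = S"
proof -
  assume S: "S \<subseteq> {..<2*n}"
  have "rot n ` rot n ` S = (\<lambda>x. rot n (rot n x)) ` S" by (rule image_image)
  also have "\<dots> = (\<lambda>x. x) ` S" by (rule image_cong[OF refl]) (meson S lessThan_iff rot_rot subsetD)
  finally show ?thesis by simp
qed
lemma rot_inj: "inj_on (rot n) {..<2*n}"
  by (rule inj_on_inverseI[where g="rot n"]) (meson lessThan_iff rot_rot)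
lemma rot_card: "S \<subseteq> {..<2*n} \<Longrightarrow> card (rot n ` S) = card S"
  by (rule card_image, rule inj_on_subset[OF rot_inj])
lemma rot_diff: "S \<subseteq> {..<2*n} \<Longrightarrow> {..<2*n} - rot n ` S = rot n ` ({..<2*n} - S)"
proof -
  assume S: "S \<subseteq> {..<2*n}"
  have a: "rot n ` {..<2*n} \<subseteq> {..<2*n}" by (rule rot_img_sub) simp
  then have "rot n ` rot n ` {..<2*n} \<subseteq> rot n ` {..<2*n}" by (rule image_mono)
  then have "rot n ` {..<2*n} = {..<2*n}" using a rot_img_img[of "{..<2*n}" n] by simp
  then show ?thesis using inj_on_image_set_diff[OF rot_inj, of "{..<2*n}" S] S by simp
qed

lemma rot_mem_lo: "i < n \<Longrightarrow> S \<subseteq> {..<2*n} \<Longrightarrow> i \<in> rot n ` S \<longleftrightarrow> i + n \<in> S"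
proof
  assume i: "i < n" and S: "S \<subseteq> {..<2*n}" and "i \<in> rot n ` S"
  then obtain s where s: "s \<in> S" "i = rot n s" by auto
  then have "s = i + n" using i unfolding rot_def by (auto split: if_splits)
  then show "i + n \<in> S" using s by simp
next
  assume i: "i < n" and "i + n \<in> S"
  moreover have "rot n (i + n) = i" unfolding rot_def by simp
  ultimately show "i \<in> rot n ` S" by (metis image_eqI)
qed
lemma rot_mem_hi: "i < n \<Longrightarrow> S \<subseteq> {..<2*n} \<Longrightarrow> i + n \<in> rot n ` S \<longleftrightarrow> i \<in> S"
proof
  assume i: "i < n" and S: "S \<subseteq> {..<2*n}" and "i + n \<in> rot n ` S"
  then obtain s where s: "s \<in> S" "i + n = rot n s" by auto
  then have "s = i" using i S unfolding rot_def by (auto split: if_splits)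
  then show "i \<in> S" using s by simp
next
  assume i: "i < n" and "i \<in> S"
  moreover have "rot n i = i + n" unfolding rot_def using i by simp
  ultimately show "i + n \<in> rot n ` S" by (metis image_eqI)
qed

lemma card_split:
  fixes S :: "nat set"
  assumes S: "S \<subseteq> {..<2*n}"
  shows "card S = card {i. i < n \<and> i \<in> S} + card {j. j < n \<and> j + n \<in> S}"
proof -
  have fS: "finite S" using S finite_subset by blast
  have cs: "card S = card (S \<inter> {x. x < n}) + card (S - {x. x < n})"
    using fS by (rule card_Int_Diff)
  have e1: "S \<inter> {x. x < n} = {i. i < n \<and> i \<in> S}" by blast
  have e2: "S - {x. x < n} = (\<lambda>j. j + n) ` {j. j < n \<and> j + n \<in> S}"
  proof (rule set_eqI, rule iffI)
    fix x assume x: "x \<in> S - {x. x < n}"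
    then have xs: "x \<in> S" "\<not> x < n" by auto
    have "x < 2*n" using subsetD[OF S xs(1)] by simp
    then have a: "x - n < n" by linarith
    have b: "x = (x - n) + n" using xs(2) by simp
    show "x \<in> (\<lambda>j. j + n) ` {j. j < n \<and> j + n \<in> S}"
      by (rule image_eqI[where x="x-n"]) (use a b xs(1) in auto)
  next
    fix x assume "x \<in> (\<lambda>j. j + n) ` {j. j < n \<and> j + n \<in> S}"
    then show "x \<in> S - {x. x < n}" by auto
  qed
  have "card ((\<lambda>j. j + n) ` {j. j < n \<and> j + n \<in> S}) = card {j. j < n \<and> j + n \<in> S}"
    by (rule card_image) (simp add: inj_on_def)
  then show ?thesis using cs e1 e2 by simp
qed

lemma rot_sum:
  assumes S: "S \<subseteq> {..<2*n}" and c: "card {i. i < n \<and> i \<in> S} = card {j. j < n \<and> j + n \<in> S}"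
  shows "\<Sum>(rot n ` S) = \<Sum>S"
proof -
  have fS: "finite S" using S finite_subset by blast
  have e1: "S \<inter> {x. x < n} = {i. i < n \<and> i \<in> S}" by auto
  have cs: "card S = card (S \<inter> {x. x < n}) + card (S \<inter> - {x. x < n})"
    using fS by (metis card_Int_Diff Diff_eq)
  have c2: "card (S \<inter> - {x. x < n}) = card (S \<inter> {x. x < n})"
    using cs card_split[OF S] c e1 by simp
  have "int (\<Sum>(rot n ` S)) = (\<Sum>i\<in>S. int (rot n i))"
    using sum.reindex[OF inj_on_subset[OF rot_inj S]] by simp
  also have "\<dots> = (\<Sum>i\<in>S. int i + (if i < n then int n else - int n))"
    by (rule sum.cong) (auto simp: rot_def of_nat_diff)
  also have "\<dots> = int (\<Sum>S) + (int n * card (S \<inter> {x. x < n}) - int n * card (S \<inter> - {x. x < n}))"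
    by (simp add: sum.distrib sum.If_cases fS)
  also have "\<dots> = int (\<Sum>S)" using c2 by simp
  finally show ?thesis by (simp only: of_nat_sum[symmetric] of_nat_eq_iff)
qed



lemma card_not: "card {i. i < n \<and> \<not> P i} = n - card {i::nat. i < n \<and> P i}"
proof -
  have "{i. i < n \<and> \<not> P i} = {..<n} - {i. i < n \<and> P i}" by auto
  moreover have "{i. i < n \<and> P i} \<subseteq> {..<n}" by auto
  moreover have "finite {i. i < n \<and> P i}" by simp
  ultimately show ?thesis using card_Diff_subset[of "{i. i < n \<and> P i}" "{..<n}"] by simp
qed

lemma density_swap:
  fixes \<alpha> :: "real^'n::finite \<Rightarrow> (real^'n) list \<Rightarrow> real" and z :: "(real^'n) \<times> (real^'n)"
  assumes N: "CARD('n) = 2*k+1" and ev: "even k"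
    and ax: "alt_form (k+1) (\<alpha> (fst z))" and ay: "alt_form (k+1) (\<alpha> (snd z))"
    and ne: "fst z \<noteq> snd z"
  shows "helicity_density (k+1) \<alpha> (prod.swap z) = - helicity_density (k+1) \<alpha> z"
proof -
  define n where "n = CARD('n)"
  define p where "p = k+1"
  define b :: "(real^'n) list" where "b = map (\<lambda>i. axis i 1) enum_idx"
  have lb: "length b = n" unfolding b_def n_def by (simp add: length_enum_idx)
  define E1 where "E1 = (\<lambda>v::real^'n. (v, 0::real^'n))"
  define E2 where "E2 = (\<lambda>v::real^'n. (0::real^'n, v))"
  have pb: "prod_basis = map E1 b @ map E2 b"
    unfolding prod_basis_def b_def E1_def E2_def by (simp add: comp_def)
  define lo where "lo S = nths b S" for S
  define hi where "hi S = nths b {j. j + n \<in> S}" for S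
  have npb: "nths prod_basis S = map E1 (lo S) @ map E2 (hi S)" for S
    unfolding pb nths_append nths_map lo_def hi_def using lb by simp
  have lpb: "length (prod_basis :: ((real^'n) \<times> (real^'n)) list) = 2*n" unfolding pb using lb by simp
  have Ueq: "2*p + (CARD('n) - 1) = 2*n" using N unfolding n_def p_def by simp
  define C where "C = {S. S \<subseteq> {..<2*n} \<and> card S = 2*p}"
  define sg where "sg S = (-1::real) ^ (\<Sum>S - 2*p*(2*p-1) div 2)" for S
  define u where "u = gauss z"
  define L where "L = frechet_derivative gauss (at z)"
  define ar where "ar = sphere_area TYPE('n)"
  have lenS: "length (lo S) + length (hi S) = 2*p" if "S \<in> C" for S
  proof -
    have "length (nths (prod_basis :: ((real^'n) \<times> (real^'n)) list) S) = card S" using that lpb unfolding C_def by (intro length_nths_sub) auto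
    then show ?thesis using that npb[of S] unfolding C_def by simp
  qed
  define t where "t S = sg S * (if length (lo S) = p then \<alpha> (fst z) (lo S) * \<alpha> (snd z) (hi S) else 0)
     * (list_det (u # map L (nths prod_basis ({..<2*n} - S))) / ar)" for S
  define t' where "t' S = sg S * (if length (lo S) = p then \<alpha> (snd z) (lo S) * \<alpha> (fst z) (hi S) else 0)
     * (list_det (- u # map (\<lambda>v. - L (prod.swap v)) (nths prod_basis ({..<2*n} - S))) / ar)" for S
  have dz: "helicity_density p \<alpha> z = (\<Sum>S\<in>C. t S)"
    unfolding helicity_density_def wedge_def[of "2*p" "CARD('n) - 1"] Ueq C_def[symmetric]
    apply (rule sum.cong[OF refl])
    subgoal for S
      unfolding t_def sg_def npb gauss_pullback_def sphere_vol_def u_def L_def ar_def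
      using wedge_inner[OF ax[folded p_def] ay[folded p_def], of "lo S" "hi S"] lenS[of S] E1_def E2_def
      by simp
    done
  have ds: "helicity_density p \<alpha> (prod.swap z) = (\<Sum>S\<in>C. t' S)"
    unfolding helicity_density_def wedge_def[of "2*p" "CARD('n) - 1"] Ueq C_def[symmetric]
    apply (rule sum.cong[OF refl])
    subgoal for S
      unfolding t'_def sg_def npb gauss_pullback_def sphere_vol_def u_def L_def ar_def
        gauss_swap gauss_deriv_swap[OF ne]
      using wedge_inner[OF ay[folded p_def] ax[folded p_def], of "lo S" "hi S"] lenS[of S] E1_def E2_def
      by simp
    done
  have key: "t' S = - t (rot n ` S)" if S: "S \<in> C" for S
  proof -
    let ?U = "{..<2*n}"
    have Ssub: "S \<subseteq> ?U" using S unfolding C_def by auto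
    define D where "D = ?U - S"
    have Dsub: "D \<subseteq> ?U" unfolding D_def by auto
    have loR: "lo (rot n ` T) = hi T" if "T \<subseteq> ?U" for T
      unfolding lo_def hi_def by (rule nths_cong_lt) (use rot_mem_lo[OF _ that] lb in auto)
    have hiR: "hi (rot n ` T) = lo T" if "T \<subseteq> ?U" for T
      unfolding lo_def hi_def by (rule nths_cong_lt) (use rot_mem_hi[OF _ that] lb in auto)
    have RS: "rot n ` S \<in> C" using S unfolding C_def by (auto simp: rot_img_sub rot_card)
    have lenlo: "length (lo T) = card {i. i < n \<and> i \<in> T}" for T
      unfolding lo_def length_nths lb ..
    have lenhi: "length (hi T) = card {j. j < n \<and> j + n \<in> T}" for T
      unfolding hi_def length_nths lb by simp
    show ?thesis
    proof (cases "length (lo S) = p")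
      case False
      have "length (lo (rot n ` S)) \<noteq> p" using lenS[OF S] False loR[OF Ssub] by simp
      then show ?thesis using False unfolding t_def t'_def by simp
    next
      case True
      have hp: "length (hi S) = p" using lenS[OF S] True by simp
      have l2: "length (lo (rot n ` S)) = p" using hp loR[OF Ssub] by simp
      have sgR: "sg (rot n ` S) = sg S"
        unfolding sg_def using rot_sum[OF Ssub] True hp lenlo lenhi by simp
      have kX: "length (lo D) = k"
      proof -
        have "{i. i < n \<and> i \<in> D} = {i. i < n \<and> \<not> i \<in> S}" unfolding D_def by auto
        then show ?thesis using lenlo[of D] lenlo[of S] True card_not[of n "\<lambda>i. i \<in> S"] N
          unfolding n_def p_def by simp
      qed
      have kY: "length (hi D) = k"
      proof -
        have "{j. j < n \<and> j + n \<in> D} = {j. j < n \<and> \<not> j + n \<in> S}" unfolding D_def by auto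
        then show ?thesis using lenhi[of D] lenhi[of S] hp card_not[of n "\<lambda>j. j + n \<in> S"] N
          unfolding n_def p_def by simp
      qed
      define XX where "XX = map (L \<circ> E2) (lo D)"
      define YY where "YY = map (L \<circ> E1) (hi D)"
      have swE: "prod.swap (E1 v) = E2 v" "prod.swap (E2 v) = E1 v" for v
        unfolding E1_def E2_def by auto
      have G1: "list_det (- u # map (\<lambda>v. - L (prod.swap v)) (nths prod_basis D)) = - list_det (u # YY @ XX)"
      proof -
        have "- u # map (\<lambda>v. - L (prod.swap v)) (nths prod_basis D) = map uminus (u # XX @ YY)"
          unfolding npb XX_def YY_def by (simp add: swE comp_def)
        then have "list_det (- u # map (\<lambda>v. - L (prod.swap v)) (nths prod_basis D))
             = (-1) ^ CARD('n) * list_det (u # XX @ YY)"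
          using list_det_uminus[of "u # XX @ YY"] kX kY N XX_def YY_def by simp
        also have "list_det (u # XX @ YY) = list_det ([u] @ XX @ [] @ YY @ [])" by simp
        also have "\<dots> = (-1) ^ length XX * list_det ([u] @ YY @ [] @ XX @ [])"
          by (rule list_det_blockswap) (use kX kY N XX_def YY_def in auto)
        finally show ?thesis using N ev kX XX_def by simp
      qed
      have G2: "list_det (u # map L (nths prod_basis (?U - rot n ` S))) = list_det (u # YY @ XX)"
        unfolding rot_diff[OF Ssub] D_def[symmetric] npb loR[OF Dsub] hiR[OF Dsub] XX_def YY_def
        by simp
      show ?thesis unfolding t_def t'_def using True l2 sgR G1 G2 loR[OF Ssub] hiR[OF Ssub]
        by (simp add: D_def)
    qed
  qed
  have "(\<Sum>S\<in>C. t' S) = (\<Sum>S\<in>C. - t (rot n ` S))" using key by simp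
  also have "\<dots> = - (\<Sum>S\<in>C. t S)"
  proof -
    have "(\<Sum>S\<in>C. t S) = (\<Sum>S\<in>C. t (rot n ` S))"
      by (rule sum.reindex_bij_witness[where i="\<lambda>S. rot n ` S" and j="\<lambda>S. rot n ` S"])
        (auto simp: C_def rot_img_img rot_img_sub rot_card)
    then show ?thesis by (simp add: sum_negf)
  qed
  finally show ?thesis using dz ds unfolding p_def by simp
qed


theorem proposition2p11:
  fixes k :: nat
    and \<Omega> U :: "(real^'n::finite) set"
    and \<alpha> :: "real^'n \<Rightarrow> (real^'n) list \<Rightarrow> real"
  assumes "k \<ge> 1" and "even k"
    and "CARD('n) = 2 * k + 1"
    and "compact \<Omega>" and "connected \<Omega>" and "interior \<Omega> \<noteq> {}"
    and "smooth_boundary \<Omega>"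
    and "open U" and "\<Omega> \<subseteq> U"
    and "diff_form (k + 1) U \<alpha>"
    and "\<forall>x\<in>\<Omega>. \<forall>vs. length vs = k + 2 \<longrightarrow> ext_d \<alpha> x vs = 0"
    and "dirichlet (k + 1) \<Omega> \<alpha>"
  shows "helicity (k + 1) \<Omega> \<alpha> = 0"
proof -
  let ?f = "helicity_density (k + 1) \<alpha>"
  let ?C = "config2 \<Omega>"
  have alt: "alt_form (k + 1) (\<alpha> x)" if "x \<in> \<Omega>" for x
    using assms(9,10) that unfolding diff_form_def by blast
  have sw: "prod.swap z \<in> ?C \<longleftrightarrow> z \<in> ?C" for z
    unfolding config2_def by (cases z) auto
  have anti: "?f (prod.swap z) = - ?f z" if "z \<in> ?C" for z
  proof -
    have "fst z \<in> \<Omega>" "snd z \<in> \<Omega>" "fst z \<noteq> snd z"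
      using that unfolding config2_def by (cases z, auto)+
    then show ?thesis using density_swap[OF assms(3,2)] alt by blast
  qed
  have h: "indicator ?C (prod.swap z) *\<^sub>R ?f (prod.swap z) = - (indicator ?C z *\<^sub>R ?f z)" for z
  proof (cases "z \<in> ?C")
    case True
    then show ?thesis using anti[OF True] sw[of z] by simp
  next
    case False
    then show ?thesis using sw[of z] by simp
  qed
  show ?thesis
    unfolding helicity_def set_lebesgue_integral_def
    by (rule integral_swap_anti) (rule h)
qed

end
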